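(* Let $\mathcal L$ be a factorial and almost prolongable language over a finite alphabet whose complexity function $p$ is unbounded and grows subexponentially. Then there exists an increasing sequence of positive integers $(n_d)_d$ such that the Rauzy graphs $R(n_d)$ converge to the line $\mathbf Z$ in the Benjamini–Schramm sense.
   Context: $\mathcal L_n=\mathcal L\cap\mathcal A^n$, $p(n)=|\mathcal L_n|$; $p$ grows subexponentially if $\lim_n\frac1n\log p(n)=0$. $\mathcal L$ is factorial if every subword of a word of $\mathcal L$ lies in $\mathcal L$. A word $v\in\mathcal L$ is left-prolongable (resp. right-prolongable) if $av\in\mathcal L$ (resp. $va\in\mathcal L$) for some letter $a$; $\mathcal L$ is almost prolongable if the proportions of left-prolongable and of right-prolongable words in $\mathcal L_n$ both tend to $1$. The Rauzy graph $R(n)$ has vertex set $\mathcal L_n$ and, for each $aub\in\mathcal L_{n+1}$ ($a,b$ letters), one edge between $au$ and $ub$ (loops and multiple edges allowed). Convergence to $\mathbf Z$ means: for each $r$, the proportion of vertices whose ball of radius $r$ is isomorphic to the ball of radius $r$ in the bi-infinite path tends to $1$. *)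

theory Defs
  imports Complex_Main
begin

definition Ln :: "'a list set \<Rightarrow> nat \<Rightarrow> 'a list set" where
  "Ln L n = {w \<in> L. length w = n}"

definition complexity :: "'a list set \<Rightarrow> nat \<Rightarrow> nat" where
  "complexity L n = card (Ln L n)"

definition factorial_lang :: "'a list set \<Rightarrow> bool" where
  "factorial_lang L \<longleftrightarrow> (\<forall>u x v. u @ x @ v \<in> L \<longrightarrow> x \<in> L)"

definition left_prolongable :: "'a list set \<Rightarrow> 'a list \<Rightarrow> bool" where
  "left_prolongable L v \<longleftrightarrow> (\<exists>a. a # v \<in> L)"

definition right_prolongable :: "'a list set \<Rightarrow> 'a list \<Rightarrow> bool" where
  "right_prolongable L v \<longleftrightarrow> (\<exists>a. v @ [a] \<in> L)"

definition almost_prolongable :: "'a list set \<Rightarrow> bool" where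
  "almost_prolongable L \<longleftrightarrow>
     ((\<lambda>n. real (card {v \<in> Ln L n. left_prolongable L v}) / real (complexity L n))
        \<longlonglongrightarrow> 1) \<and>
     ((\<lambda>n. real (card {v \<in> Ln L n. right_prolongable L v}) / real (complexity L n))
        \<longlonglongrightarrow> 1)"

definition subexponential :: "(nat \<Rightarrow> nat) \<Rightarrow> bool" where
  "subexponential p \<longleftrightarrow> (\<lambda>n. ln (real (p n)) / real n) \<longlonglongrightarrow> 0"

text \<open>Rauzy graph R(n): vertex set Ln L n; one edge between take n w and drop 1 w for
  each w in Ln L (n+1) (loops and multiple edges allowed). The number of edges between
  two vertices x, y (a loop counted once):\<close>

definition rauzy_mult :: "'a list set \<Rightarrow> nat \<Rightarrow> 'a list \<Rightarrow> 'a list \<Rightarrow> nat" where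
  "rauzy_mult L n x y = card {w \<in> Ln L (Suc n).
      (take n w = x \<and> drop 1 w = y) \<or> (take n w = y \<and> drop 1 w = x)}"

definition rauzy_adj :: "'a list set \<Rightarrow> nat \<Rightarrow> 'a list \<Rightarrow> 'a list \<Rightarrow> bool" where
  "rauzy_adj L n x y \<longleftrightarrow> rauzy_mult L n x y > 0"

definition rauzy_ball :: "'a list set \<Rightarrow> nat \<Rightarrow> nat \<Rightarrow> 'a list \<Rightarrow> 'a list set" where
  "rauzy_ball L n r v = {u. \<exists>k\<le>r. (rauzy_adj L n ^^ k) v u}"

text \<open>The rooted ball of radius r around v (with all edges between its vertices)
  is isomorphic to the rooted ball of radius r in the bi-infinite path Z, i.e. the path
  -r, ..., r rooted at 0 with simple edges between consecutive integers and nothing else.\<close>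

definition ball_is_line :: "'a list set \<Rightarrow> nat \<Rightarrow> nat \<Rightarrow> 'a list \<Rightarrow> bool" where
  "ball_is_line L n r v \<longleftrightarrow>
     (\<exists>f :: int \<Rightarrow> 'a list.
        bij_betw f {- int r..int r} (rauzy_ball L n r v) \<and> f 0 = v \<and>
        (\<forall>i\<in>{- int r..int r}. \<forall>j\<in>{- int r..int r}.
            rauzy_mult L n (f i) (f j) = (if \<bar>i - j\<bar> = 1 then 1 else 0)))"

definition converges_to_Z :: "'a list set \<Rightarrow> (nat \<Rightarrow> nat) \<Rightarrow> bool" where
  "converges_to_Z L nd \<longleftrightarrow>
     (\<forall>r. (\<lambda>d. real (card {v \<in> Ln L (nd d). ball_is_line L (nd d) r v})
               / real (card (Ln L (nd d)))) \<longlonglongrightarrow> 1)"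

end

theory Submission
  imports Defs
begin


definition lext :: "'a list set \<Rightarrow> 'a list \<Rightarrow> 'a set" where
  "lext L x = {a. a # x \<in> L}"
definition rext :: "'a list set \<Rightarrow> 'a list \<Rightarrow> 'a set" where
  "rext L x = {b. x @ [b] \<in> L}"
definition sc :: "'a list set \<Rightarrow> 'a list \<Rightarrow> 'a list" where
  "sc L x = drop 1 (x @ [SOME b. x @ [b] \<in> L])"
definition pd :: "'a list set \<Rightarrow> 'a list \<Rightarrow> 'a list" where
  "pd L x = take (length x) ((SOME a. a # x \<in> L) # x)"
definition Gd :: "'a list set \<Rightarrow> nat \<Rightarrow> 'a list set" where
  "Gd L n = {x \<in> Ln L n. card (lext L x) = 1 \<and> card (rext L x) = 1}"

lemma Gd_sub: "Gd L n \<subseteq> Ln L n" unfolding Gd_def by auto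

lemma Gd_rext: assumes "x \<in> Gd L n" shows "rext L x = {SOME b. x @ [b] \<in> L}"
proof -
  from assms have "card (rext L x) = 1" unfolding Gd_def by auto
  then obtain b where b: "rext L x = {b}" by (auto simp: card_1_singleton_iff)
  hence "x @ [b] \<in> L" unfolding rext_def by auto
  hence "x @ [SOME b. x @ [b] \<in> L] \<in> L" by (rule someI)
  with b show ?thesis unfolding rext_def by auto
qed

lemma Gd_lext: assumes "x \<in> Gd L n" shows "lext L x = {SOME a. a # x \<in> L}"
proof -
  from assms have "card (lext L x) = 1" unfolding Gd_def by auto
  then obtain b where b: "lext L x = {b}" by (auto simp: card_1_singleton_iff)
  hence "b # x \<in> L" unfolding lext_def by auto
  hence "(SOME b. b # x \<in> L) # x \<in> L" by (rule someI)
  with b show ?thesis unfolding lext_def by auto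
qed

lemma Ln_finite: "finite (Ln (L :: ('a::finite) list set) n)"
proof -
  have "Ln L n \<subseteq> {xs. set xs \<subseteq> UNIV \<and> length xs = n}" unfolding Ln_def by auto
  thus ?thesis using finite_lists_length_eq[of "UNIV :: 'a set" n] finite_subset by auto
qed

lemma fact_tl: assumes "factorial_lang L" "a # u \<in> L" shows "u \<in> L"
  using assms unfolding factorial_lang_def by (metis append.left_neutral append_Cons append_Nil2)

lemma fact_butlast: assumes "factorial_lang L" "u @ [a] \<in> L" shows "u \<in> L"
  using assms unfolding factorial_lang_def by (metis append.left_neutral)

lemma sc_len: "length (sc L x) = length x" unfolding sc_def by simp
lemma pd_len: "length (pd L x) = length x" unfolding pd_def by simp

lemma sc_in: assumes "factorial_lang L" "x \<in> Ln L n" "x @ [b] \<in> L" shows "sc L x \<in> Ln L n"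
proof -
  have "x @ [SOME b. x @ [b] \<in> L] \<in> L" using assms(3) by (rule someI)
  moreover have "x @ [SOME b. x @ [b] \<in> L] = hd (x @ [SOME b. x @ [b] \<in> L]) # sc L x"
    unfolding sc_def by (cases x) auto
  ultimately have "sc L x \<in> L" using fact_tl assms(1) by metis
  thus ?thesis using assms(2) sc_len[of L x] unfolding Ln_def by auto
qed

lemma pd_in: assumes "factorial_lang L" "x \<in> Ln L n" "a # x \<in> L" shows "pd L x \<in> Ln L n"
proof -
  let ?a = "SOME a. a # x \<in> L"
  have h: "?a # x \<in> L" using assms(3) by (rule someI)
  have "?a # x = pd L x @ [last (?a # x)]" unfolding pd_def
    by (metis append_butlast_last_id butlast_conv_take length_Cons list.distinct(1) diff_Suc_1)
  with h have "pd L x \<in> L" using fact_butlast assms(1) by metis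
  thus ?thesis using assms(2) pd_len[of L x] unfolding Ln_def by auto
qed

lemma pd_sc: assumes "x \<in> Ln L n" "x @ [b] \<in> L" "sc L x \<in> Gd L n" shows "pd L (sc L x) = x"
proof -
  let ?b = "SOME b. x @ [b] \<in> L"
  have h: "x @ [?b] \<in> L" using assms(2) by (rule someI)
  have e: "x @ [?b] = hd (x @ [?b]) # sc L x" unfolding sc_def by (cases x) auto
  hence "hd (x @ [?b]) \<in> lext L (sc L x)" using h unfolding lext_def by simp
  hence "(SOME a. a # sc L x \<in> L) = hd (x @ [?b])" using Gd_lext[OF assms(3)] by auto
  hence "pd L (sc L x) = take (length x) (x @ [?b])" unfolding pd_def sc_len using e by metis
  thus ?thesis by simp
qed

lemma sc_pd: assumes "x \<in> Ln L n" "a # x \<in> L" "pd L x \<in> Gd L n" shows "sc L (pd L x) = x"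
proof -
  let ?a = "SOME a. a # x \<in> L"
  have h: "?a # x \<in> L" using assms(2) by (rule someI)
  have e: "?a # x = pd L x @ [last (?a # x)]" unfolding pd_def
    by (metis append_butlast_last_id butlast_conv_take length_Cons list.distinct(1) diff_Suc_1)
  hence "last (?a # x) \<in> rext L (pd L x)" using h unfolding rext_def by simp
  hence "(SOME b. pd L x @ [b] \<in> L) = last (?a # x)" using Gd_rext[OF assms(3)] by auto
  hence "sc L (pd L x) = drop 1 (?a # x)" unfolding sc_def using e by metis
  thus ?thesis by simp
qed




lemma Gd_r: assumes "x \<in> Gd L n" shows "x @ [SOME b. x @ [b] \<in> L] \<in> L"
  using Gd_rext[OF assms] unfolding rext_def by auto
lemma Gd_l: assumes "x \<in> Gd L n" shows "(SOME a. a # x \<in> L) # x \<in> L"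
  using Gd_lext[OF assms] unfolding lext_def by auto
lemma Gd_Ln: "x \<in> Gd L n \<Longrightarrow> x \<in> Ln L n" using Gd_sub by blast
lemma Gd_len: "x \<in> Gd L n \<Longrightarrow> length x = n" using Gd_sub unfolding Ln_def by blast

lemma Gd_sc_in: "factorial_lang L \<Longrightarrow> x \<in> Gd L n \<Longrightarrow> sc L x \<in> Ln L n"
  by (rule sc_in[OF _ Gd_Ln Gd_r])
lemma Gd_pd_in: "factorial_lang L \<Longrightarrow> x \<in> Gd L n \<Longrightarrow> pd L x \<in> Ln L n"
  by (rule pd_in[OF _ Gd_Ln Gd_l])

lemma Gd_take: assumes "x \<in> Gd L n" "w \<in> Ln L (Suc n)" "take n w = x"
  shows "w = x @ [SOME b. x @ [b] \<in> L]"
proof -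
  have lw: "length w = Suc n" "w \<in> L" using assms(2) unfolding Ln_def by auto
  have ne: "w \<noteq> []" using lw by auto
  have bt: "butlast w = take n w" using lw by (simp add: butlast_conv_take)
  have e: "x @ [last w] = w" using append_butlast_last_id[OF ne] bt assms(3) by simp
  hence "last w \<in> rext L x" using lw unfolding rext_def by simp
  hence "last w = (SOME b. x @ [b] \<in> L)" using Gd_rext[OF assms(1)] by blast
  thus ?thesis using e by simp
qed

lemma Gd_drop: assumes "x \<in> Gd L n" "w \<in> Ln L (Suc n)" "drop 1 w = x"
  shows "w = (SOME a. a # x \<in> L) # x"
proof -
  have lw: "length w = Suc n" "w \<in> L" using assms(2) unfolding Ln_def by auto
  have e: "hd w # x = w" using lw assms(3) by (cases w) auto
  hence "hd w \<in> lext L x" using lw unfolding lext_def by simp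
  hence "hd w = (SOME a. a # x \<in> L)" using Gd_lext[OF assms(1)] by blast
  thus ?thesis using e by simp
qed

lemma Gd_wr: assumes "x \<in> Gd L n"
  shows "x @ [SOME b. x @ [b] \<in> L] \<in> Ln L (Suc n)" "take n (x @ [SOME b. x @ [b] \<in> L]) = x"
    "drop 1 (x @ [SOME b. x @ [b] \<in> L]) = sc L x"
  using Gd_r[OF assms] Gd_len[OF assms] unfolding Ln_def sc_def by auto

lemma Gd_wl: assumes "x \<in> Gd L n"
  shows "(SOME a. a # x \<in> L) # x \<in> Ln L (Suc n)" "take n ((SOME a. a # x \<in> L) # x) = pd L x"
    "drop 1 ((SOME a. a # x \<in> L) # x) = x"
  using Gd_l[OF assms] Gd_len[OF assms] unfolding Ln_def pd_def by auto

lemma mult_fin: "finite {w \<in> Ln (L::('a::finite) list set) (Suc n). P w}"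
  using Ln_finite[of L "Suc n"] by auto

lemma adj_Gd: assumes "x \<in> Gd (L::('a::finite) list set) n" "rauzy_adj L n x y"
  shows "y = sc L x \<or> y = pd L x"
proof -
  let ?S = "{w \<in> Ln L (Suc n). (take n w = x \<and> drop 1 w = y) \<or> (take n w = y \<and> drop 1 w = x)}"
  from assms(2) have "card ?S > 0" unfolding rauzy_adj_def rauzy_mult_def .
  hence "?S \<noteq> {}" by (metis card.empty less_irrefl)
  then obtain w where w: "w \<in> Ln L (Suc n)"
    "(take n w = x \<and> drop 1 w = y) \<or> (take n w = y \<and> drop 1 w = x)" by blast
  from w(2) show ?thesis
  proof
    assume h: "take n w = x \<and> drop 1 w = y"
    have "w = x @ [SOME b. x @ [b] \<in> L]" by (rule Gd_take[OF assms(1) w(1) conjunct1[OF h]])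
    hence "y = sc L x" using h Gd_wr(3)[OF assms(1)] by simp
    thus ?thesis ..
  next
    assume h: "take n w = y \<and> drop 1 w = x"
    have "w = (SOME a. a # x \<in> L) # x" by (rule Gd_drop[OF assms(1) w(1) conjunct2[OF h]])
    hence "y = pd L x" using h Gd_wl(2)[OF assms(1)] by simp
    thus ?thesis ..
  qed
qed

lemma card_pos_mem: "w \<in> S \<Longrightarrow> finite S \<Longrightarrow> 0 < card S"
  by (metis card_0_eq empty_iff neq0_conv)

lemma adj_sc: assumes "x \<in> Gd (L::('a::finite) list set) n" shows "rauzy_adj L n x (sc L x)"
proof -
  let ?w = "x @ [SOME b. x @ [b] \<in> L]"
  have "?w \<in> {w \<in> Ln L (Suc n). (take n w = x \<and> drop 1 w = sc L x) \<or> (take n w = sc L x \<and> drop 1 w = x)}"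
    using Gd_wr[OF assms] by auto
  moreover have "finite {w \<in> Ln L (Suc n). (take n w = x \<and> drop 1 w = sc L x) \<or> (take n w = sc L x \<and> drop 1 w = x)}"
    by (rule mult_fin)
  ultimately show ?thesis unfolding rauzy_adj_def rauzy_mult_def by (rule card_pos_mem)
qed

lemma adj_pd: assumes "x \<in> Gd (L::('a::finite) list set) n" shows "rauzy_adj L n x (pd L x)"
proof -
  let ?w = "(SOME a. a # x \<in> L) # x"
  have "?w \<in> {w \<in> Ln L (Suc n). (take n w = x \<and> drop 1 w = pd L x) \<or> (take n w = pd L x \<and> drop 1 w = x)}"
    using Gd_wl[OF assms] by auto
  moreover have "finite {w \<in> Ln L (Suc n). (take n w = x \<and> drop 1 w = pd L x) \<or> (take n w = pd L x \<and> drop 1 w = x)}"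
    by (rule mult_fin)
  ultimately show ?thesis unfolding rauzy_adj_def rauzy_mult_def by (rule card_pos_mem)
qed




lemma mult_Gd: assumes "x \<in> Gd (L::('a::finite) list set) n" "sc L x \<noteq> pd L x"
  shows "rauzy_mult L n x y = (if y = sc L x \<or> y = pd L x then 1 else 0)"
proof -
  define S where "S = {w \<in> Ln L (Suc n). (take n w = x \<and> drop 1 w = y) \<or> (take n w = y \<and> drop 1 w = x)}"
  define wr where "wr = x @ [SOME b. x @ [b] \<in> L]"
  define wl where "wl = (SOME a. a # x \<in> L) # x"
  have r: "wr \<in> Ln L (Suc n)" "take n wr = x" "drop 1 wr = sc L x" using Gd_wr[OF assms(1)] unfolding wr_def by auto
  have l: "wl \<in> Ln L (Suc n)" "take n wl = pd L x" "drop 1 wl = x" using Gd_wl[OF assms(1)] unfolding wl_def by auto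
  have c1: "w = wr" if "w \<in> Ln L (Suc n)" "take n w = x" for w using Gd_take[OF assms(1) that] unfolding wr_def .
  have c2: "w = wl" if "w \<in> Ln L (Suc n)" "drop 1 w = x" for w using Gd_drop[OF assms(1) that] unfolding wl_def .
  have ch: "w \<in> S \<longleftrightarrow> (w = wr \<and> y = sc L x) \<or> (w = wl \<and> y = pd L x)" for w
  proof
    assume w: "w \<in> S"
    hence w1: "w \<in> Ln L (Suc n)" unfolding S_def by blast
    from w have "(take n w = x \<and> drop 1 w = y) \<or> (take n w = y \<and> drop 1 w = x)" unfolding S_def by blast
    thus "(w = wr \<and> y = sc L x) \<or> (w = wl \<and> y = pd L x)"
    proof
      assume h: "take n w = x \<and> drop 1 w = y"
      hence "w = wr" using c1 w1 by blast
      thus ?thesis using h r(3) by blast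
    next
      assume h: "take n w = y \<and> drop 1 w = x"
      hence "w = wl" using c2 w1 by blast
      thus ?thesis using h l(2) by blast
    qed
  next
    assume "(w = wr \<and> y = sc L x) \<or> (w = wl \<and> y = pd L x)"
    thus "w \<in> S" unfolding S_def using r l by auto
  qed
  have m: "rauzy_mult L n x y = card S" unfolding rauzy_mult_def S_def by (rule refl)
  show ?thesis
  proof (cases "y = sc L x")
    case True
    hence "y \<noteq> pd L x" using assms(2) by simp
    hence "S = {wr}" using ch True by (intro set_eqI) simp
    thus ?thesis using m True by simp
  next
    case F: False
    show ?thesis
    proof (cases "y = pd L x")
      case True
      hence "S = {wl}" using ch F by (intro set_eqI) simp
      thus ?thesis using m True by simp
    next
      case False
      hence "S = {}" using ch F by (intro set_eqI) simp
      thus ?thesis using m False F by simp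
    qed
  qed
qed




lemma chain_inv:
  assumes "\<forall>x\<in>G. s x \<in> G \<longrightarrow> t (s x) = x" "\<forall>i\<le>j. (s^^i) v \<in> G"
  shows "(t^^j) ((s^^j) v) = v"
  using assms(2)
proof (induction j)
  case 0 thus ?case by simp
next
  case (Suc j)
  have g1: "(s^^j) v \<in> G" using Suc.prems by simp
  have g2: "s ((s^^j) v) \<in> G" using Suc.prems by (metis funpow.simps(2) o_apply order_refl)
  have e1: "(t^^Suc j) y = (t^^j) (t y)" for y by (simp only: funpow_Suc_right o_apply)
  have "(t^^Suc j) ((s^^Suc j) v) = (t^^j) (t (s ((s^^j) v)))"
    using e1 by (metis funpow.simps(2) o_apply)
  also have "t (s ((s^^j) v)) = (s^^j) v" using assms(1) g1 g2 by blast
  also have "(t^^j) ((s^^j) v) = v" using Suc by simp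
  finally show ?case .
qed

lemma chain_count:
  assumes "finite V" "\<forall>x\<in>G. s x \<in> G \<longrightarrow> t (s x) = x" "G \<subseteq> V"
  shows "card {v\<in>V. \<exists>k\<le>K. (s^^k) v \<notin> G} \<le> card (V - G) + K * card {x\<in>G. s x \<notin> G}"
proof -
  let ?X = "{x\<in>G. s x \<notin> G}"
  have sub: "{v\<in>V. \<exists>k\<le>K. (s^^k) v \<notin> G} \<subseteq> (V - G) \<union> (\<Union>j\<in>{..<K}. (t^^j) ` ?X)"
  proof
    fix v assume v: "v \<in> {v\<in>V. \<exists>k\<le>K. (s^^k) v \<notin> G}"
    then obtain k where k: "k \<le> K" "(s^^k) v \<notin> G" by blast
    define k0 where "k0 = (LEAST k. (s^^k) v \<notin> G)"
    have k0: "(s^^k0) v \<notin> G" unfolding k0_def by (rule LeastI[of _ k]) (rule k(2))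
    have k0le: "k0 \<le> k" unfolding k0_def by (rule Least_le) (rule k(2))
    have below: "(s^^i) v \<in> G" if "i < k0" for i using not_less_Least[of i] that unfolding k0_def by blast
    show "v \<in> (V - G) \<union> (\<Union>j\<in>{..<K}. (t^^j) ` ?X)"
    proof (cases k0)
      case 0 thus ?thesis using k0 v by auto
    next
      case (Suc j)
      have jK: "j \<in> {..<K}" using Suc k0le k by auto
      have "(s^^j) v \<in> ?X" using below[of j] k0 Suc by auto
      moreover have "(t^^j) ((s^^j) v) = v"
        by (rule chain_inv[OF assms(2)]) (use below Suc in auto)
      ultimately show ?thesis using jK by (metis (no_types, lifting) UN_iff UnI2 image_eqI)
    qed
  qed
  have fX: "finite ?X" using assms(1,3) by (metis (no_types, lifting) finite_subset mem_Collect_eq subsetI subset_iff)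
  have "card {v\<in>V. \<exists>k\<le>K. (s^^k) v \<notin> G} \<le> card ((V - G) \<union> (\<Union>j\<in>{..<K}. (t^^j) ` ?X))"
    by (rule card_mono) (use assms(1) fX sub in auto)
  also have "\<dots> \<le> card (V - G) + card (\<Union>j\<in>{..<K}. (t^^j) ` ?X)" by (rule card_Un_le)
  also have "card (\<Union>j\<in>{..<K}. (t^^j) ` ?X) \<le> (\<Sum>j\<in>{..<K}. card ((t^^j) ` ?X))" by (rule card_UN_le) simp
  also have "\<dots> \<le> (\<Sum>j\<in>{..<K}. card ?X)" by (rule sum_mono) (rule card_image_le[OF fX])
  finally show ?thesis by simp
qed




definition wk :: "'a list set \<Rightarrow> 'a list \<Rightarrow> int \<Rightarrow> 'a list" where
  "wk L v i = (if 0 \<le> i then (sc L ^^ nat i) v else (pd L ^^ nat (- i)) v)"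

lemma wk0: "wk L v 0 = v" unfolding wk_def by simp

lemma wk_pos: "wk L v (int t) = (sc L ^^ t) v" unfolding wk_def by simp

lemma pd_sc_Gd: "x \<in> Gd L n \<Longrightarrow> sc L x \<in> Gd L n \<Longrightarrow> pd L (sc L x) = x"
  by (rule pd_sc[OF Gd_Ln Gd_r])
lemma sc_pd_Gd: "x \<in> Gd L n \<Longrightarrow> pd L x \<in> Gd L n \<Longrightarrow> sc L (pd L x) = x"
  by (rule sc_pd[OF Gd_Ln Gd_l])

lemma wk_step:
  assumes H: "\<forall>i. - K \<le> i \<and> i \<le> K \<longrightarrow> wk L v i \<in> Gd L n"
    and i: "- K \<le> i" "i + 1 \<le> K"
  shows "wk L v (i + 1) = sc L (wk L v i) \<and> wk L v i = pd L (wk L v (i + 1))"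
proof (cases "0 \<le> i")
  case True
  have e: "wk L v (i + 1) = sc L (wk L v i)"
  proof -
    have "nat (i + 1) = Suc (nat i)" using True by simp
    thus ?thesis unfolding wk_def using True by simp
  qed
  have g1: "wk L v i \<in> Gd L n" using H i by simp
  have g2: "wk L v (i+1) \<in> Gd L n" using H i by simp
  show ?thesis using e pd_sc_Gd[OF g1] g2 by simp
next
  case False
  have e: "wk L v i = pd L (wk L v (i + 1))"
  proof (cases "i + 1 = 0")
    case True
    hence "i = -1" by simp
    thus ?thesis unfolding wk_def by simp
  next
    case F: False
    hence "nat (- i) = Suc (nat (- (i + 1)))" using False by simp
    thus ?thesis unfolding wk_def using False F by simp
  qed
  have g1: "wk L v i \<in> Gd L n" using H i by simp
  have g2: "wk L v (i+1) \<in> Gd L n" using H i by simp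
  show ?thesis using e sc_pd_Gd[OF g2] g1 by simp
qed

lemma wk_sc:
  assumes H: "\<forall>i. - K \<le> i \<and> i \<le> K \<longrightarrow> wk L v i \<in> Gd L n"
    and i: "- K \<le> i" "i + 1 \<le> K"
  shows "wk L v (i + 1) = sc L (wk L v i)"
  using wk_step[OF H i] by (rule conjunct1)

lemma wk_pd:
  assumes H: "\<forall>i. - K \<le> i \<and> i \<le> K \<longrightarrow> wk L v i \<in> Gd L n"
    and i: "- K \<le> i" "i + 1 \<le> K"
  shows "pd L (wk L v (i + 1)) = wk L v i"
  by (rule sym[OF conjunct2[OF wk_step[OF H i]]])

lemma wk_fwd:
  assumes H: "\<forall>i. - K \<le> i \<and> i \<le> K \<longrightarrow> wk L v i \<in> Gd L n"
    and i: "- K \<le> i"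
  shows "i + int t \<le> K \<Longrightarrow> wk L v (i + int t) = (sc L ^^ t) (wk L v i)"
proof (induction t)
  case 0 thus ?case by simp
next
  case (Suc t)
  have eq: "i + int (Suc t) = (i + int t) + 1" by simp
  have "wk L v ((i + int t) + 1) = sc L (wk L v (i + int t))"
    by (rule wk_sc[OF H]) (use i Suc.prems in auto)
  hence "wk L v (i + int (Suc t)) = sc L (wk L v (i + int t))" by (simp only: eq)
  moreover have "wk L v (i + int t) = (sc L ^^ t) (wk L v i)" using Suc by simp
  ultimately show ?case by simp
qed

lemma adj_pow_wk:
  assumes H: "\<forall>i. - K \<le> i \<and> i \<le> K \<longrightarrow> wk L (v::('a::finite) list) i \<in> Gd L n"
    and rK: "int r + 1 \<le> K"
  shows "k \<le> r \<Longrightarrow> (rauzy_adj L n ^^ k) v u \<Longrightarrow> \<exists>i. \<bar>i\<bar> \<le> int k \<and> u = wk L v i"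
proof (induction k arbitrary: u)
  case 0 thus ?case using wk0[of L v] by auto
next
  case (Suc k)
  from Suc.prems(2) obtain u' where u': "(rauzy_adj L n ^^ k) v u'" "rauzy_adj L n u' u"
    by (rule relpowp_Suc_E)
  have "\<exists>i. \<bar>i\<bar> \<le> int k \<and> u' = wk L v i" using Suc.IH[OF _ u'(1)] Suc.prems(1) by simp
  then obtain i where i: "\<bar>i\<bar> \<le> int k" "u' = wk L v i" by blast
  have "- K \<le> i \<and> i \<le> K" using i Suc.prems rK by auto
  hence g: "wk L v i \<in> Gd L n" by (rule H[rule_format])
  have "u = sc L (wk L v i) \<or> u = pd L (wk L v i)" using adj_Gd[OF g] u'(2) i(2) by simp
  moreover have "wk L v (i+1) = sc L (wk L v i)" by (rule wk_sc[OF H]) (use i Suc.prems rK in auto)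
  moreover have "pd L (wk L v (i - 1 + 1)) = wk L v (i - 1)" by (rule wk_pd[OF H]) (use i Suc.prems rK in auto)
  ultimately have "u = wk L v (i+1) \<or> u = wk L v (i-1)" by simp
  thus ?case
  proof
    assume "u = wk L v (i+1)" thus ?case using i(1) by (intro exI[of _ "i+1"]) auto
  next
    assume "u = wk L v (i-1)" thus ?case using i(1) by (intro exI[of _ "i-1"]) auto
  qed
qed

lemma wk_adj_pow:
  assumes H: "\<forall>i. - K \<le> i \<and> i \<le> K \<longrightarrow> wk L (v::('a::finite) list) i \<in> Gd L n"
    and rK: "int r + 1 \<le> K"
  shows "t \<le> r \<Longrightarrow> (rauzy_adj L n ^^ t) v (wk L v (int t)) \<and> (rauzy_adj L n ^^ t) v (wk L v (- int t))"
proof (induction t)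
  case 0 thus ?case using wk0[of L v] by simp
next
  case (Suc t)
  have g1: "wk L v (int t) \<in> Gd L n" using H Suc.prems rK by auto
  have g2: "wk L v (- int t) \<in> Gd L n" using H Suc.prems rK by auto
  have e1: "wk L v (int t + 1) = sc L (wk L v (int t))" by (rule wk_sc[OF H]) (use Suc.prems rK in auto)
  have e2': "pd L (wk L v (- int t - 1 + 1)) = wk L v (- int t - 1)" by (rule wk_pd[OF H]) (use Suc.prems rK in auto)
  hence e2: "wk L v (- int t - 1) = pd L (wk L v (- int t))" by simp
  have eqs: "int (Suc t) = int t + 1" "- int (Suc t) = - int t - 1" by simp_all
  have a1: "rauzy_adj L n (wk L v (int t)) (wk L v (int (Suc t)))" unfolding eqs(1) e1 by (rule adj_sc[OF g1])
  have a2: "rauzy_adj L n (wk L v (- int t)) (wk L v (- int (Suc t)))" unfolding eqs(2) e2 by (rule adj_pd[OF g2])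
  have IH: "(rauzy_adj L n ^^ t) v (wk L v (int t)) \<and> (rauzy_adj L n ^^ t) v (wk L v (- int t))"
    using Suc.IH Suc.prems by simp
  show ?case using relpowp_Suc_I[OF conjunct1[OF IH] a1] relpowp_Suc_I[OF conjunct2[OF IH] a2] by simp
qed

lemma ball_wk:
  assumes H: "\<forall>i. - K \<le> i \<and> i \<le> K \<longrightarrow> wk L (v::('a::finite) list) i \<in> Gd L n"
    and rK: "int r + 1 \<le> K"
  shows "rauzy_ball L n r v = wk L v ` {- int r..int r}"
proof
  show "rauzy_ball L n r v \<subseteq> wk L v ` {- int r..int r}"
  proof
    fix u assume "u \<in> rauzy_ball L n r v"
    then obtain k where k: "k \<le> r" "(rauzy_adj L n ^^ k) v u" unfolding rauzy_ball_def by blast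
    then obtain i where "\<bar>i\<bar> \<le> int k" "u = wk L v i" using adj_pow_wk[OF H rK] by blast
    moreover have "i \<in> {- int r..int r}" using \<open>\<bar>i\<bar> \<le> int k\<close> k(1) by auto
    ultimately show "u \<in> wk L v ` {- int r..int r}" by (intro rev_image_eqI) auto
  qed
  show "wk L v ` {- int r..int r} \<subseteq> rauzy_ball L n r v"
  proof
    fix u assume "u \<in> wk L v ` {- int r..int r}"
    then obtain i where i: "i \<in> {- int r..int r}" "u = wk L v i" by blast
    show "u \<in> rauzy_ball L n r v"
    proof (cases "0 \<le> i")
      case True
      hence "i = int (nat i)" by simp
      moreover have "nat i \<le> r" using i(1) by (simp add: nat_le_iff)
      ultimately have "(rauzy_adj L n ^^ nat i) v u" using wk_adj_pow[OF H rK, of "nat i"] i(2) by simp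
      thus ?thesis using \<open>nat i \<le> r\<close> unfolding rauzy_ball_def by blast
    next
      case False
      hence "i = - int (nat (- i))" by simp
      moreover have "nat (- i) \<le> r" using i(1) by (simp add: nat_le_iff)
      ultimately have "(rauzy_adj L n ^^ nat (- i)) v u" using wk_adj_pow[OF H rK, of "nat (- i)"] i(2) by simp
      thus ?thesis using \<open>nat (- i) \<le> r\<close> unfolding rauzy_ball_def by blast
    qed
  qed
qed




lemma wk_inj_aux:
  assumes H: "\<forall>i. - K \<le> i \<and> i \<le> K \<longrightarrow> wk L v i \<in> Gd L n"
    and KR: "K = 2 * R" "0 \<le> R"
    and np: "\<forall>m. 1 \<le> m \<and> int m \<le> K \<longrightarrow> (sc L ^^ m) v \<noteq> v"
    and ij: "- R \<le> i" "i < j" "j \<le> R" "wk L v i = wk L v j"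
  shows False
proof -
  define m where "m = nat (j - i)"
  have m1: "1 \<le> m" "int m \<le> K" "int m = j - i" using ij KR unfolding m_def by auto
  show False
  proof (cases "i \<le> 0")
    case True
    define t where "t = nat (- i)"
    have t: "i + int t = 0" "j + int t = int m" using True m1 unfolding t_def by auto
    have a: "wk L v (i + int t) = (sc L ^^ t) (wk L v i)"
      by (rule wk_fwd[OF H]) (use ij KR t in auto)
    have b: "wk L v (j + int t) = (sc L ^^ t) (wk L v j)"
      by (rule wk_fwd[OF H]) (use ij KR t m1 in auto)
    have "v = (sc L ^^ t) (wk L v i)" using a t(1) wk0[of L v] by simp
    also have "\<dots> = (sc L ^^ t) (wk L v j)" using ij(4) by simp
    also have "\<dots> = wk L v (int m)" using b t(2) by simp
    also have "\<dots> = (sc L ^^ m) v" by (rule wk_pos)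
    finally show False using np m1 by auto
  next
    case False
    define t where "t = nat i"
    have ti: "int t = i" using False unfolding t_def by simp
    have hyp: "\<forall>x\<in>Gd L n. sc L x \<in> Gd L n \<longrightarrow> pd L (sc L x) = x" using pd_sc_Gd by blast
    have c1: "\<forall>l\<le>t. (sc L ^^ l) v \<in> Gd L n"
    proof (intro allI impI)
      fix l assume "l \<le> t"
      hence "- K \<le> int l \<and> int l \<le> K" using ti ij KR by auto
      hence "wk L v (int l) \<in> Gd L n" by (rule H[rule_format])
      thus "(sc L ^^ l) v \<in> Gd L n" by (simp only: wk_pos)
    qed
    have c2: "\<forall>l\<le>t. (sc L ^^ l) ((sc L ^^ m) v) \<in> Gd L n"
    proof (intro allI impI)
      fix l assume "l \<le> t"
      hence "- K \<le> int (l + m) \<and> int (l + m) \<le> K" using ti ij KR m1 by auto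
      hence "wk L v (int (l + m)) \<in> Gd L n" by (rule H[rule_format])
      thus "(sc L ^^ l) ((sc L ^^ m) v) \<in> Gd L n" by (simp only: wk_pos funpow_add o_apply)
    qed
    have wj: "wk L v j = (sc L ^^ t) ((sc L ^^ m) v)"
    proof -
      have "j = int (t + m)" using ti m1 by simp
      hence "wk L v j = (sc L ^^ (t + m)) v" using wk_pos by metis
      thus ?thesis by (simp only: funpow_add o_apply)
    qed
    have "v = (pd L ^^ t) ((sc L ^^ t) v)" using chain_inv[OF hyp c1] by simp
    also have "(sc L ^^ t) v = wk L v i" using wk_pos[of L v t] ti by simp
    also have "\<dots> = (sc L ^^ t) ((sc L ^^ m) v)" using ij(4) wj by simp
    also have "(pd L ^^ t) \<dots> = (sc L ^^ m) v" using chain_inv[OF hyp c2] by simp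
    finally show False using np m1 by auto
  qed
qed

lemma wk_inj:
  assumes H: "\<forall>i. - K \<le> i \<and> i \<le> K \<longrightarrow> wk L v i \<in> Gd L n"
    and KR: "K = 2 * R" "0 \<le> R"
    and np: "\<forall>m. 1 \<le> m \<and> int m \<le> K \<longrightarrow> (sc L ^^ m) v \<noteq> v"
  shows "inj_on (wk L v) {-R..R}"
proof (rule inj_onI)
  fix i j assume i: "i \<in> {-R..R}" and j: "j \<in> {-R..R}" and e: "wk L v i = wk L v j"
  show "i = j"
  proof (rule linorder_cases[of i j])
    assume "i < j" thus ?thesis using wk_inj_aux[OF H KR np, of i j] i j e by auto
  next
    assume "j < i" thus ?thesis using wk_inj_aux[OF H KR np, of j i] i j e by auto
  qed
qed

lemma line_ok:
  assumes H: "\<forall>i. - (2 * int r + 2) \<le> i \<and> i \<le> 2 * int r + 2 \<longrightarrow> wk L (v::('a::finite) list) i \<in> Gd L n"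
    and np: "\<forall>m. 1 \<le> m \<and> int m \<le> 2 * int r + 2 \<longrightarrow> (sc L ^^ m) v \<noteq> v"
  shows "ball_is_line L n r v"
proof -
  let ?K = "2 * int r + 2"
  have inj: "inj_on (wk L v) {-(int r + 1)..int r + 1}"
    by (rule wk_inj[OF H _ _ np]) auto
  have ball: "rauzy_ball L n r v = wk L v ` {- int r..int r}"
    by (rule ball_wk[OF H]) auto
  have inj2: "inj_on (wk L v) {- int r..int r}" by (rule inj_on_subset[OF inj]) auto
  have bij: "bij_betw (wk L v) {- int r..int r} (rauzy_ball L n r v)"
    unfolding ball by (rule inj_on_imp_bij_betw[OF inj2])
  have mult: "rauzy_mult L n (wk L v i) (wk L v j) = (if \<bar>i - j\<bar> = 1 then 1 else 0)"
    if i: "i \<in> {- int r..int r}" and j: "j \<in> {- int r..int r}" for i j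
  proof -
    have g: "wk L v i \<in> Gd L n" by (rule H[rule_format]) (use i in auto)
    have s: "wk L v (i + 1) = sc L (wk L v i)" by (rule wk_sc[OF H]) (use i in auto)
    have p0: "pd L (wk L v (i - 1 + 1)) = wk L v (i - 1)" by (rule wk_pd[OF H]) (use i in auto)
    hence p: "pd L (wk L v i) = wk L v (i - 1)" by simp
    have ne: "wk L v (i + 1) \<noteq> wk L v (i - 1)"
      using inj_on_eq_iff[OF inj, of "i+1" "i-1"] i by auto
    have ne2: "sc L (wk L v i) \<noteq> pd L (wk L v i)" using ne s p by simp
    have e1: "wk L v j = wk L v (i + 1) \<longleftrightarrow> j = i + 1"
      using inj_on_eq_iff[OF inj, of j "i+1"] i j by auto
    have e2: "wk L v j = wk L v (i - 1) \<longleftrightarrow> j = i - 1"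
      using inj_on_eq_iff[OF inj, of j "i-1"] i j by auto
    have "rauzy_mult L n (wk L v i) (wk L v j) =
        (if wk L v j = sc L (wk L v i) \<or> wk L v j = pd L (wk L v i) then 1 else 0)"
      by (rule mult_Gd[OF g ne2])
    also have "\<dots> = (if j = i + 1 \<or> j = i - 1 then 1 else 0)" using e1 e2 s p by simp
    also have "\<dots> = (if \<bar>i - j\<bar> = 1 then 1 else 0)" by auto
    finally show ?thesis .
  qed
  show ?thesis unfolding ball_is_line_def
    using bij wk0[of L v] mult by blast
qed




lemma lext_fin: "finite (lext (L::('a::finite) list set) u)" by simp
lemma rext_fin: "finite (rext (L::('a::finite) list set) u)" by simp

lemma sum_lext:
  assumes fac: "factorial_lang (L::('a::finite) list set)"
  shows "(\<Sum>u\<in>Ln L n. card (lext L u)) = card (Ln L (Suc n))"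
proof -
  have E: "Ln L (Suc n) = (\<Union>u\<in>Ln L n. (\<lambda>a. a # u) ` lext L u)"
  proof
    show "Ln L (Suc n) \<subseteq> (\<Union>u\<in>Ln L n. (\<lambda>a. a # u) ` lext L u)"
    proof
      fix w assume w: "w \<in> Ln L (Suc n)"
      then obtain a u where au: "w = a # u" unfolding Ln_def by (cases w) auto
      have "u \<in> L" using fact_tl[OF fac] w au unfolding Ln_def by auto
      hence "u \<in> Ln L n" using w au unfolding Ln_def by auto
      moreover have "a \<in> lext L u" using w au unfolding Ln_def lext_def by auto
      ultimately show "w \<in> (\<Union>u\<in>Ln L n. (\<lambda>a. a # u) ` lext L u)" using au by blast
    qed
    show "(\<Union>u\<in>Ln L n. (\<lambda>a. a # u) ` lext L u) \<subseteq> Ln L (Suc n)"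
      unfolding Ln_def lext_def by auto
  qed
  have "card (\<Union>u\<in>Ln L n. (\<lambda>a. a # u) ` lext L u) = (\<Sum>u\<in>Ln L n. card ((\<lambda>a. a # u) ` lext L u))"
    by (rule card_UN_disjoint) (use Ln_finite in auto)
  also have "\<dots> = (\<Sum>u\<in>Ln L n. card (lext L u))"
    by (rule sum.cong) (auto simp: card_image inj_on_def)
  finally show ?thesis using E by simp
qed

lemma sum_rext:
  assumes fac: "factorial_lang (L::('a::finite) list set)"
  shows "(\<Sum>u\<in>Ln L n. card (rext L u)) = card (Ln L (Suc n))"
proof -
  have E: "Ln L (Suc n) = (\<Union>u\<in>Ln L n. (\<lambda>a. u @ [a]) ` rext L u)"
  proof
    show "Ln L (Suc n) \<subseteq> (\<Union>u\<in>Ln L n. (\<lambda>a. u @ [a]) ` rext L u)"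
    proof
      fix w assume w: "w \<in> Ln L (Suc n)"
      then obtain a u where au: "w = u @ [a]" unfolding Ln_def by (cases w rule: rev_cases) auto
      have "u \<in> L" using fact_butlast[OF fac] w au unfolding Ln_def by auto
      hence "u \<in> Ln L n" using w au unfolding Ln_def by auto
      moreover have "a \<in> rext L u" using w au unfolding Ln_def rext_def by auto
      ultimately show "w \<in> (\<Union>u\<in>Ln L n. (\<lambda>a. u @ [a]) ` rext L u)" using au by blast
    qed
    show "(\<Union>u\<in>Ln L n. (\<lambda>a. u @ [a]) ` rext L u) \<subseteq> Ln L (Suc n)"
      unfolding Ln_def rext_def by auto
  qed
  have "card (\<Union>u\<in>Ln L n. (\<lambda>a. u @ [a]) ` rext L u) = (\<Sum>u\<in>Ln L n. card ((\<lambda>a. u @ [a]) ` rext L u))"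
    by (rule card_UN_disjoint) (use Ln_finite in auto)
  also have "\<dots> = (\<Sum>u\<in>Ln L n. card (rext L u))"
    by (rule sum.cong) (auto simp: card_image inj_on_def)
  finally show ?thesis using E by simp
qed

definition PP :: "'a list set \<Rightarrow> nat \<Rightarrow> 'a list set" where
  "PP L n = {v \<in> Ln L n. left_prolongable L v \<and> right_prolongable L v}"

lemma degree_bound:
  assumes fac: "factorial_lang (L::('a::finite) list set)"
  shows "3 * card (PP L n) \<le> card (Gd L n) + 2 * card (Ln L (Suc n))"
proof -
  let ?P = "PP L n" and ?V = "Ln L n" and ?G = "Gd L n"
  let ?f = "\<lambda>u. card (lext L u) + card (rext L u)"
  have fP: "finite ?P" using Ln_finite[of L n] unfolding PP_def by auto
  have pt: "3 \<le> ?f u + (if u \<in> ?G then 1 else 0)" if u: "u \<in> ?P" for u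
  proof -
    have "lext L u \<noteq> {}" using u unfolding PP_def left_prolongable_def lext_def by auto
    hence l1: "1 \<le> card (lext L u)" using lext_fin[of L u] by (simp add: Suc_le_eq card_gt_0_iff)
    have "rext L u \<noteq> {}" using u unfolding PP_def right_prolongable_def rext_def by auto
    hence r1: "1 \<le> card (rext L u)" using rext_fin[of L u] by (simp add: Suc_le_eq card_gt_0_iff)
    show ?thesis
    proof (cases "u \<in> ?G")
      case True thus ?thesis using l1 r1 by simp
    next
      case False
      hence "\<not> (card (lext L u) = 1 \<and> card (rext L u) = 1)" using u unfolding PP_def Gd_def by auto
      thus ?thesis using l1 r1 False by auto
    qed
  qed
  have "3 * card ?P = (\<Sum>u\<in>?P. 3)" by simp
  also have "\<dots> \<le> (\<Sum>u\<in>?P. ?f u + (if u \<in> ?G then 1 else 0))" by (rule sum_mono) (rule pt)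
  also have "\<dots> = (\<Sum>u\<in>?P. ?f u) + (\<Sum>u\<in>?P. (if u \<in> ?G then 1 else 0))" by (rule sum.distrib)
  also have "(\<Sum>u\<in>?P. (if u \<in> ?G then 1 else 0)) = card (?P \<inter> ?G)"
    using fP by (simp add: sum.If_cases)
  also have "card (?P \<inter> ?G) \<le> card ?G"
    by (rule card_mono) (use Ln_finite[of L n] Gd_sub[of L n] finite_subset in auto)
  also have "(\<Sum>u\<in>?P. ?f u) \<le> (\<Sum>u\<in>?V. ?f u)"
    by (rule sum_mono2) (use Ln_finite[of L n] in \<open>auto simp: PP_def\<close>)
  also have "(\<Sum>u\<in>?V. ?f u) = 2 * card (Ln L (Suc n))"
    using sum_lext[OF fac, of n] sum_rext[OF fac, of n] by (simp add: sum.distrib)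
  finally show ?thesis by simp
qed

lemma V_bound:
  "card (Ln (L::('a::finite) list set) n) \<le> card (PP L n) + card {v \<in> Ln L n. \<not> left_prolongable L v}
     + card {v \<in> Ln L n. \<not> right_prolongable L v}"
proof -
  have "Ln L n \<subseteq> PP L n \<union> {v \<in> Ln L n. \<not> left_prolongable L v} \<union> {v \<in> Ln L n. \<not> right_prolongable L v}"
    unfolding PP_def by auto
  hence "card (Ln L n) \<le> card (PP L n \<union> {v \<in> Ln L n. \<not> left_prolongable L v} \<union> {v \<in> Ln L n. \<not> right_prolongable L v})"
    by (rule card_mono[rotated]) (use Ln_finite[of L n] in \<open>auto simp: PP_def\<close>)
  also have "\<dots> \<le> card (PP L n \<union> {v \<in> Ln L n. \<not> left_prolongable L v}) + card {v \<in> Ln L n. \<not> right_prolongable L v}"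
    by (rule card_Un_le)
  also have "card (PP L n \<union> {v \<in> Ln L n. \<not> left_prolongable L v}) \<le> card (PP L n) + card {v \<in> Ln L n. \<not> left_prolongable L v}"
    by (rule card_Un_le)
  finally show ?thesis by simp
qed

lemma Xs_bound:
  "card {x \<in> Gd (L::('a::finite) list set) n. sc L x \<notin> Gd L n} + card (Gd L n) \<le> card (Ln L (Suc n))"
proof -
  let ?E = "Ln L (Suc n)" and ?G = "Gd L n"
  let ?A = "{w \<in> ?E. drop 1 w \<notin> ?G}" and ?B = "{w \<in> ?E. drop 1 w \<in> ?G}"
  have fE: "finite ?E" by (rule Ln_finite)
  have "card {x \<in> ?G. sc L x \<notin> ?G} \<le> card ?A"
  proof (rule card_inj_on_le[of "\<lambda>x. x @ [SOME b. x @ [b] \<in> L]"])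
    show "inj_on (\<lambda>x. x @ [SOME b. x @ [b] \<in> L]) {x \<in> ?G. sc L x \<notin> ?G}" by (rule inj_onI) simp
    show "(\<lambda>x. x @ [SOME b. x @ [b] \<in> L]) ` {x \<in> ?G. sc L x \<notin> ?G} \<subseteq> ?A"
      using Gd_wr by fastforce
    show "finite ?A" using fE by simp
  qed
  moreover have "card ?G \<le> card ?B"
  proof (rule card_inj_on_le[of "\<lambda>x. (SOME a. a # x \<in> L) # x"])
    show "inj_on (\<lambda>x. (SOME a. a # x \<in> L) # x) ?G" by (rule inj_onI) simp
    show "(\<lambda>x. (SOME a. a # x \<in> L) # x) ` ?G \<subseteq> ?B"
      using Gd_wl by fastforce
    show "finite ?B" using fE by simp
  qed
  moreover have "card ?A + card ?B = card ?E"
  proof -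
    have "card (?A \<union> ?B) = card ?A + card ?B" by (rule card_Un_disjoint) (use fE in auto)
    moreover have "?A \<union> ?B = ?E" by auto
    ultimately show ?thesis by simp
  qed
  ultimately show ?thesis by linarith
qed

lemma Xp_bound:
  "card {x \<in> Gd (L::('a::finite) list set) n. pd L x \<notin> Gd L n} + card (Gd L n) \<le> card (Ln L (Suc n))"
proof -
  let ?E = "Ln L (Suc n)" and ?G = "Gd L n"
  let ?A = "{w \<in> ?E. take n w \<notin> ?G}" and ?B = "{w \<in> ?E. take n w \<in> ?G}"
  have fE: "finite ?E" by (rule Ln_finite)
  have "card {x \<in> ?G. pd L x \<notin> ?G} \<le> card ?A"
  proof (rule card_inj_on_le[of "\<lambda>x. (SOME a. a # x \<in> L) # x"])
    show "inj_on (\<lambda>x. (SOME a. a # x \<in> L) # x) {x \<in> ?G. pd L x \<notin> ?G}" by (rule inj_onI) simp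
    show "(\<lambda>x. (SOME a. a # x \<in> L) # x) ` {x \<in> ?G. pd L x \<notin> ?G} \<subseteq> ?A"
      using Gd_wl by fastforce
    show "finite ?A" using fE by simp
  qed
  moreover have "card ?G \<le> card ?B"
  proof (rule card_inj_on_le[of "\<lambda>x. x @ [SOME b. x @ [b] \<in> L]"])
    show "inj_on (\<lambda>x. x @ [SOME b. x @ [b] \<in> L]) ?G" by (rule inj_onI) simp
    show "(\<lambda>x. x @ [SOME b. x @ [b] \<in> L]) ` ?G \<subseteq> ?B"
      using Gd_wr by fastforce
    show "finite ?B" using fE by simp
  qed
  moreover have "card ?A + card ?B = card ?E"
  proof -
    have "card (?A \<union> ?B) = card ?A + card ?B" by (rule card_Un_disjoint) (use fE in auto)
    moreover have "?A \<union> ?B = ?E" by auto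
    ultimately show ?thesis by simp
  qed
  ultimately show ?thesis by linarith
qed




lemma sc_nth: "Suc t < length x \<Longrightarrow> sc L x ! t = x ! Suc t"
  unfolding sc_def by (cases x) (auto simp: nth_append)

lemma scpow_len: "length ((sc L ^^ k) x) = length x"
  by (induction k) (simp_all add: sc_len)

lemma scpow_nth: "t + k < length x \<Longrightarrow> (sc L ^^ k) x ! t = x ! (t + k)"
proof (induction k arbitrary: x t)
  case 0 thus ?case by simp
next
  case (Suc k)
  have "(sc L ^^ Suc k) x = (sc L ^^ k) (sc L x)" by (simp only: funpow_Suc_right o_apply)
  also have "\<dots> ! t = sc L x ! (t + k)" using Suc.IH[of t "sc L x"] Suc.prems by (simp add: sc_len)
  also have "\<dots> = x ! (t + Suc k)" using sc_nth[of "t + k" x L] Suc.prems by simp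
  finally show ?case .
qed

lemma per_mod:
  assumes "(sc L ^^ m) v = v" "1 \<le> m"
  shows "t < length v \<Longrightarrow> v ! t = v ! (t mod m)"
proof (induction t rule: less_induct)
  case (less t)
  show ?case
  proof (cases "t < m")
    case True thus ?thesis by simp
  next
    case False
    have "v ! (t - m) = (sc L ^^ m) v ! (t - m)" using assms(1) by simp
    also have "\<dots> = v ! (t - m + m)" by (rule scpow_nth) (use less.prems False in auto)
    also have "t - m + m = t" using False by simp
    finally have e: "v ! t = v ! (t - m)" by simp
    have "v ! (t - m) = v ! ((t - m) mod m)" by (rule less.IH) (use less.prems False assms(2) in auto)
    also have "(t - m) mod m = t mod m" using False le_mod_geq[of m t] by simp
    finally show ?thesis using e by simp
  qed
qed

lemma per_card:
  assumes "M \<le> n"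
  shows "card {v \<in> Ln (L::('a::finite) list set) n. \<exists>m. 1 \<le> m \<and> m \<le> M \<and> (sc L ^^ m) v = v}
         \<le> (\<Sum>m\<in>{1..M}. card (UNIV::'a set) ^ m)"
proof -
  let ?S = "\<lambda>m. {v \<in> Ln L n. (sc L ^^ m) v = v}"
  have sub: "{v \<in> Ln L n. \<exists>m. 1 \<le> m \<and> m \<le> M \<and> (sc L ^^ m) v = v} \<subseteq> (\<Union>m\<in>{1..M}. ?S m)" by auto
  have cS: "card (?S m) \<le> card (UNIV::'a set) ^ m" if m: "m \<in> {1..M}" for m
  proof -
    have "card (?S m) \<le> card {xs. set xs \<subseteq> (UNIV::'a set) \<and> length xs = m}"
    proof (rule card_inj_on_le[of "take m"])
      show "inj_on (take m) (?S m)"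
      proof (rule inj_onI)
        fix v w assume v: "v \<in> ?S m" and w: "w \<in> ?S m" and e: "take m v = take m w"
        have lv: "length v = n" and lw: "length w = n" using v w unfolding Ln_def by auto
        show "v = w"
        proof (rule nth_equalityI)
          show "length v = length w" using lv lw by simp
          fix t assume t: "t < length v"
          have tm: "t mod m < m" using m by simp
          have "v ! t = v ! (t mod m)" using per_mod[where L=L and m=m and v=v and t=t] v m t by auto
          also have "\<dots> = take m v ! (t mod m)" using tm by simp
          also have "\<dots> = take m w ! (t mod m)" using e by simp
          also have "\<dots> = w ! (t mod m)" using tm by simp
          also have "\<dots> = w ! t" using per_mod[where L=L and m=m and v=w and t=t] w m t lv lw by auto
          finally show "v ! t = w ! t" .
        qed
      qed
      show "take m ` ?S m \<subseteq> {xs. set xs \<subseteq> UNIV \<and> length xs = m}"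
        using m assms unfolding Ln_def by auto
      show "finite {xs. set xs \<subseteq> (UNIV::'a set) \<and> length xs = m}"
        by (rule finite_lists_length_eq) simp
    qed
    also have "\<dots> = card (UNIV::'a set) ^ m" by (rule card_lists_length_eq) simp
    finally show ?thesis .
  qed
  have "card {v \<in> Ln L n. \<exists>m. 1 \<le> m \<and> m \<le> M \<and> (sc L ^^ m) v = v} \<le> card (\<Union>m\<in>{1..M}. ?S m)"
    by (rule card_mono[OF _ sub]) (use Ln_finite[of L n] in auto)
  also have "\<dots> \<le> (\<Sum>m\<in>{1..M}. card (?S m))" by (rule card_UN_le) simp
  also have "\<dots> \<le> (\<Sum>m\<in>{1..M}. card (UNIV::'a set) ^ m)" by (rule sum_mono) (rule cS)
  finally show ?thesis .
qed




lemma count_main: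
  fixes L :: "('a::finite) list set"
  assumes fac: "factorial_lang L" and Kdef: "K = 2 * r + 2" and Kn: "K \<le> n"
  shows "card (Ln L n) + 2 * card (Gd L n) + 2 * K * card (Gd L n)
    \<le> card {v \<in> Ln L n. ball_is_line L n r v} + 2 * card (Ln L n) + 2 * K * card (Ln L (Suc n))
       + (\<Sum>m\<in>{1..K}. card (UNIV::'a set) ^ m)"
proof -
  let ?V = "Ln L n" and ?G = "Gd L n" and ?E = "Ln L (Suc n)"
  let ?Lin = "{v \<in> ?V. ball_is_line L n r v}"
  let ?Fs = "{v \<in> ?V. \<exists>k\<le>K. (sc L ^^ k) v \<notin> ?G}"
  let ?Fp = "{v \<in> ?V. \<exists>k\<le>K. (pd L ^^ k) v \<notin> ?G}"
  let ?Per = "{v \<in> ?V. \<exists>m. 1 \<le> m \<and> m \<le> K \<and> (sc L ^^ m) v = v}"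
  have fV: "finite ?V" by (rule Ln_finite)
  have GV: "?G \<subseteq> ?V" by (rule Gd_sub)
  have cover: "?V \<subseteq> ?Lin \<union> ?Fs \<union> ?Fp \<union> ?Per"
  proof
    fix v assume v: "v \<in> ?V"
    show "v \<in> ?Lin \<union> ?Fs \<union> ?Fp \<union> ?Per"
    proof (rule ccontr)
      assume "v \<notin> ?Lin \<union> ?Fs \<union> ?Fp \<union> ?Per"
      hence nl: "\<not> ball_is_line L n r v" and s: "\<forall>k\<le>K. (sc L ^^ k) v \<in> ?G"
        and p: "\<forall>k\<le>K. (pd L ^^ k) v \<in> ?G" and np0: "\<forall>m. 1 \<le> m \<and> m \<le> K \<longrightarrow> (sc L ^^ m) v \<noteq> v"
        using v by auto
      have H: "\<forall>i. - (2 * int r + 2) \<le> i \<and> i \<le> 2 * int r + 2 \<longrightarrow> wk L v i \<in> ?G"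
      proof (intro allI impI)
        fix i assume i: "- (2 * int r + 2) \<le> i \<and> i \<le> 2 * int r + 2"
        show "wk L v i \<in> ?G"
        proof (cases "0 \<le> i")
          case True
          have "nat i \<le> K" by (subst nat_le_iff) (use i Kdef in simp)
          thus ?thesis using s True unfolding wk_def by simp
        next
          case False
          have "nat (- i) \<le> K" by (subst nat_le_iff) (use i Kdef in simp)
          thus ?thesis using p False unfolding wk_def by simp
        qed
      qed
      have np: "\<forall>m. 1 \<le> m \<and> int m \<le> 2 * int r + 2 \<longrightarrow> (sc L ^^ m) v \<noteq> v"
        using np0 Kdef by auto
      show False using line_ok[OF H np] nl by simp
    qed
  qed
  have hs: "\<forall>x\<in>?G. sc L x \<in> ?G \<longrightarrow> pd L (sc L x) = x" using pd_sc_Gd by blast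
  have hp: "\<forall>x\<in>?G. pd L x \<in> ?G \<longrightarrow> sc L (pd L x) = x" using sc_pd_Gd by blast
  have cFs: "card ?Fs \<le> card (?V - ?G) + K * card {x\<in>?G. sc L x \<notin> ?G}"
    by (rule chain_count[OF fV hs GV])
  have cFp: "card ?Fp \<le> card (?V - ?G) + K * card {x\<in>?G. pd L x \<notin> ?G}"
    by (rule chain_count[OF fV hp GV])
  have dG: "card (?V - ?G) + card ?G = card ?V"
    using card_Diff_subset[OF finite_subset[OF GV fV] GV] card_mono[OF fV GV] by simp
  have xs: "K * card {x\<in>?G. sc L x \<notin> ?G} + K * card ?G \<le> K * card ?E"
    using Xs_bound[of L n] by (simp add: add_mult_distrib2[symmetric])
  have xp: "K * card {x\<in>?G. pd L x \<notin> ?G} + K * card ?G \<le> K * card ?E"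
    using Xp_bound[of L n] by (simp add: add_mult_distrib2[symmetric])
  have cP: "card ?Per \<le> (\<Sum>m\<in>{1..K}. card (UNIV::'a set) ^ m)" by (rule per_card[OF Kn])
  have "card ?V \<le> card (?Lin \<union> ?Fs \<union> ?Fp \<union> ?Per)"
    by (rule card_mono[OF _ cover]) (use fV in auto)
  also have "\<dots> \<le> card ?Lin + card ?Fs + card ?Fp + card ?Per"
    by (meson card_Un_le add_le_mono order_trans le_refl)
  finally have "card ?V \<le> card ?Lin + card ?Fs + card ?Fp + card ?Per" .
  thus ?thesis using cFs cFp dG xs xp cP by linarith
qed




lemma growth_exists:
  fixes p :: "nat \<Rightarrow> nat"
  assumes ub: "\<not> bdd_above (range p)" and se: "(\<lambda>n. ln (real (p n)) / real n) \<longlonglongrightarrow> 0"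
    and eps: "0 < eps"
  shows "\<exists>n\<ge>N. real M \<le> real (p n) \<and> real (p (Suc n)) \<le> (1 + eps) * real (p n)"
proof (rule ccontr)
  assume "\<not> ?thesis"
  hence A: "\<And>n. n \<ge> N \<Longrightarrow> real M \<le> real (p n) \<Longrightarrow> real (p (Suc n)) > (1 + eps) * real (p n)"
    by (simp add: not_le) (meson not_less)
  define B where "B = (\<Sum>i\<le>N. p i) + M + 1"
  have "\<exists>n0. p n0 > B"
  proof (rule ccontr)
    assume "\<not> (\<exists>n0. p n0 > B)"
    hence "\<forall>x\<in>range p. x \<le> B" by (auto simp: not_less)
    thus False using ub unfolding bdd_above_def by blast
  qed
  then obtain n0 where n0: "p n0 > B" by blast
  have n0N: "n0 \<ge> N"
  proof (rule ccontr)
    assume "\<not> n0 \<ge> N"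
    hence "p n0 \<le> (\<Sum>i\<le>N. p i)" by (intro member_le_sum) auto
    thus False using n0 unfolding B_def by simp
  qed
  have pn0: "real M + 1 \<le> real (p n0)" using n0 unfolding B_def by simp
  have grow: "real (p (n0 + t)) \<ge> (1 + eps) ^ t * real (p n0)" for t
  proof (induction t)
    case 0 thus ?case by simp
  next
    case (Suc t)
    have "1 \<le> (1 + eps) ^ t" using eps by simp
    hence "1 * real (p n0) \<le> (1 + eps) ^ t * real (p n0)"
      by (rule mult_right_mono) simp
    hence "real (p n0) \<le> (1 + eps) ^ t * real (p n0)" by simp
    hence "real M \<le> real (p (n0 + t))" using Suc pn0 by linarith
    hence "real (p (Suc (n0 + t))) > (1 + eps) * real (p (n0 + t))" using A n0N by simp
    moreover have "(1 + eps) * real (p (n0 + t)) \<ge> (1 + eps) * ((1 + eps) ^ t * real (p n0))"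
      using Suc eps by (intro mult_left_mono) auto
    ultimately show ?case by simp
  qed
  define c where "c = ln (1 + eps)"
  have c0: "c > 0" unfolding c_def using eps by simp
  have "eventually (\<lambda>n. ln (real (p n)) / real n < c / 2) sequentially"
    using order_tendstoD(2)[OF se, of "c / 2"] c0 by linarith
  then obtain N1 where N1: "\<And>n. n \<ge> N1 \<Longrightarrow> ln (real (p n)) / real n < c / 2"
    unfolding eventually_sequentially by blast
  define t where "t = n0 + N1 + 1"
  define n where "n = n0 + t"
  have nN1: "n \<ge> N1" unfolding n_def t_def by simp
  have npos: "real n > 0" unfolding n_def t_def by simp
  have p1: "real (p n0) \<ge> 1" using pn0 by simp
  have "(1 + eps) ^ t \<le> (1 + eps) ^ t * real (p n0)" using p1 eps by simp
  also have "\<dots> \<le> real (p n)" using grow[of t] unfolding n_def .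
  finally have pn: "(1 + eps) ^ t \<le> real (p n)" .
  have "real t * c = ln ((1 + eps) ^ t)" unfolding c_def using eps by (simp add: ln_realpow)
  also have "\<dots> \<le> ln (real (p n))"
  proof -
    have pp: "0 < (1 + eps) ^ t" using eps by simp
    hence "0 < real (p n)" using pn by linarith
    thus ?thesis using pn pp by (subst ln_le_cancel_iff) auto
  qed
  finally have lnp: "real t * c \<le> ln (real (p n))" .
  have "c / 2 \<le> real t * c / real n"
  proof -
    have "real n \<le> 2 * real t" unfolding n_def t_def by simp
    hence "c * real n \<le> c * (2 * real t)" using c0 by (intro mult_left_mono) auto
    thus ?thesis using npos by (simp add: field_simps)
  qed
  also have "\<dots> \<le> ln (real (p n)) / real n" using lnp npos by (simp add: divide_right_mono)
  finally show False using N1[OF nN1] by simp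
qed




lemma ratio_ineq:
  fixes p q g P N lin C K e :: real
  assumes h1: "p + 2 * g + 2 * K * g \<le> lin + 2 * p + 2 * K * q + C" and h2: "3 * P \<le> g + 2 * q"
    and h3: "p \<le> P + N" and h4: "q \<le> (1 + e) * p" and K: "0 \<le> K"
  shows "p - (4 + 6 * K) * (e * p) - 6 * (1 + K) * N - C \<le> lin"
proof -
  have g1: "3 * p - 3 * N - 2 * q \<le> g" using h2 h3 by linarith
  have g2: "(2 + 2 * K) * (3 * p - 3 * N - 2 * q) \<le> (2 + 2 * K) * g" using g1 K by (intro mult_left_mono) auto
  have q2: "(4 + 6 * K) * q \<le> (4 + 6 * K) * ((1 + e) * p)" using h4 K by (intro mult_left_mono) auto
  have g3: "6 * p + 6 * (K * p) - 6 * N - 6 * (K * N) - 4 * q - 4 * (K * q) \<le> 2 * g + 2 * (K * g)"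
    using g2 by (simp add: algebra_simps)
  have q3: "4 * q + 6 * (K * q) \<le> 4 * p + 6 * (K * p) + 4 * (e * p) + 6 * (K * (e * p))"
    using q2 by (simp add: algebra_simps)
  have h1': "p + 2 * g + 2 * (K * g) \<le> lin + 2 * p + 2 * (K * q) + C" using h1 by (simp add: algebra_simps)
  have "p - 4 * (e * p) - 6 * (K * (e * p)) - 6 * N - 6 * (K * N) - C \<le> lin"
    using h1' g3 q3 by linarith
  thus ?thesis by (simp add: algebra_simps)
qed

lemma card_split: "finite A \<Longrightarrow> card {v \<in> A. \<not> P v} + card {v \<in> A. P v} = card A"
proof -
  assume f: "finite A"
  have "card ({v \<in> A. \<not> P v} \<union> {v \<in> A. P v}) = card {v \<in> A. \<not> P v} + card {v \<in> A. P v}"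
    by (rule card_Un_disjoint) (use f in auto)
  moreover have "{v \<in> A. \<not> P v} \<union> {v \<in> A. P v} = A" by auto
  ultimately show ?thesis by simp
qed




lemma div_expand:
  fixes P a e b x y C :: real
  assumes "0 < P"
  shows "(P - a * (e * P) - b * (x + y) - C) / P = 1 - a * e - b * (x / P + y / P) - C / P"
  using assms by (simp add: field_simps)

theorem lemma2p5:
  fixes L :: "('a::finite) list set"
  assumes "factorial_lang L"
    and "almost_prolongable L"
    and "\<not> bdd_above (range (complexity L))"
    and "subexponential (complexity L)"
  shows "\<exists>nd :: nat \<Rightarrow> nat. strict_mono nd \<and> (\<forall>d. nd d > 0) \<and> converges_to_Z L nd"
proof -
  note fac = assms(1) and ap = assms(2) and ub = assms(3)
  let ?p = "complexity L"
  have se': "(\<lambda>n. ln (real (?p n)) / real n) \<longlonglongrightarrow> 0" using assms(4) unfolding subexponential_def .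
  define spec where "spec = (\<lambda>N d n. N \<le> n \<and> real (Suc d) \<le> real (?p n) \<and>
      real (?p (Suc n)) \<le> (1 + inverse (real (Suc d))) * real (?p n))"
  have ex: "\<exists>n. spec N d n" for N d
  proof -
    have "\<exists>n\<ge>N. real (Suc d) \<le> real (?p n) \<and> real (?p (Suc n)) \<le> (1 + inverse (real (Suc d))) * real (?p n)"
      by (rule growth_exists[OF ub se']) simp
    thus ?thesis unfolding spec_def by blast
  qed
  define h where "h = (\<lambda>N d. SOME n. spec N d n)"
  have hs: "spec N d (h N d)" for N d unfolding h_def by (rule someI_ex[OF ex])
  define nd where "nd = rec_nat (h 1 0) (\<lambda>d prev. h (Suc prev) (Suc d))"
  have nd0: "nd 0 = h 1 0" unfolding nd_def by simp
  have ndS: "nd (Suc d) = h (Suc (nd d)) (Suc d)" for d unfolding nd_def by simp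
  have specnd: "\<exists>N. spec N d (nd d)" for d
  proof (cases d)
    case 0 thus ?thesis using hs[of 1 0] nd0 by auto
  next
    case (Suc d') thus ?thesis using hs[of "Suc (nd d')" "Suc d'"] ndS[of d'] by auto
  qed
  have smono: "strict_mono nd" unfolding strict_mono_Suc_iff
  proof
    fix d show "nd d < nd (Suc d)" using hs[of "Suc (nd d)" "Suc d"] ndS[of d] unfolding spec_def by simp
  qed
  have pos: "nd d > 0" for d
  proof (cases d)
    case 0 thus ?thesis using hs[of 1 0] nd0 unfolding spec_def by simp
  next
    case (Suc d') thus ?thesis using hs[of "Suc (nd d')" "Suc d'"] ndS[of d'] unfolding spec_def by simp
  qed
  have dle: "d \<le> nd d" for d using seq_suble[OF smono] .
  have pd1: "real (Suc d) \<le> real (card (Ln L (nd d)))" for d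
    using specnd[of d] unfolding spec_def complexity_def by auto
  have pd2: "real (card (Ln L (Suc (nd d)))) \<le> (1 + inverse (real (Suc d))) * real (card (Ln L (nd d)))" for d
    using specnd[of d] unfolding spec_def complexity_def by auto
  have ppos: "0 < real (card (Ln L (nd d)))" for d
  proof -
    have "0 < real (Suc d)" by simp
    thus ?thesis using pd1[of d] by linarith
  qed
  have lim_l: "(\<lambda>d. real (card {v \<in> Ln L (nd d). \<not> left_prolongable L v}) / real (card (Ln L (nd d)))) \<longlonglongrightarrow> 0"
  proof -
    have l1: "(\<lambda>n. real (card {v \<in> Ln L n. left_prolongable L v}) / real (complexity L n)) \<longlonglongrightarrow> 1"
      using ap unfolding almost_prolongable_def by blast
    have "((\<lambda>n. real (card {v \<in> Ln L n. left_prolongable L v}) / real (complexity L n)) \<circ> nd) \<longlonglongrightarrow> 1"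
      by (rule LIMSEQ_subseq_LIMSEQ[OF l1 smono])
    hence "(\<lambda>d. 1 - real (card {v \<in> Ln L (nd d). left_prolongable L v}) / real (card (Ln L (nd d)))) \<longlonglongrightarrow> 1 - 1"
      by (intro tendsto_diff tendsto_const) (simp add: o_def complexity_def)
    moreover have "1 - real (card {v \<in> Ln L (nd d). left_prolongable L v}) / real (card (Ln L (nd d)))
        = real (card {v \<in> Ln L (nd d). \<not> left_prolongable L v}) / real (card (Ln L (nd d)))" for d
    proof -
      have "real (card {v \<in> Ln L (nd d). \<not> left_prolongable L v}) + real (card {v \<in> Ln L (nd d). left_prolongable L v})
          = real (card (Ln L (nd d)))"
        using card_split[OF Ln_finite[of L "nd d"], of "left_prolongable L"] by linarith
      thus ?thesis using ppos[of d] by (simp add: field_simps)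
    qed
    ultimately show ?thesis by simp
  qed
  have lim_r: "(\<lambda>d. real (card {v \<in> Ln L (nd d). \<not> right_prolongable L v}) / real (card (Ln L (nd d)))) \<longlonglongrightarrow> 0"
  proof -
    have l1: "(\<lambda>n. real (card {v \<in> Ln L n. right_prolongable L v}) / real (complexity L n)) \<longlonglongrightarrow> 1"
      using ap unfolding almost_prolongable_def by blast
    have "((\<lambda>n. real (card {v \<in> Ln L n. right_prolongable L v}) / real (complexity L n)) \<circ> nd) \<longlonglongrightarrow> 1"
      by (rule LIMSEQ_subseq_LIMSEQ[OF l1 smono])
    hence "(\<lambda>d. 1 - real (card {v \<in> Ln L (nd d). right_prolongable L v}) / real (card (Ln L (nd d)))) \<longlonglongrightarrow> 1 - 1"
      by (intro tendsto_diff tendsto_const) (simp add: o_def complexity_def)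
    moreover have "1 - real (card {v \<in> Ln L (nd d). right_prolongable L v}) / real (card (Ln L (nd d)))
        = real (card {v \<in> Ln L (nd d). \<not> right_prolongable L v}) / real (card (Ln L (nd d)))" for d
    proof -
      have "real (card {v \<in> Ln L (nd d). \<not> right_prolongable L v}) + real (card {v \<in> Ln L (nd d). right_prolongable L v})
          = real (card (Ln L (nd d)))"
        using card_split[OF Ln_finite[of L "nd d"], of "right_prolongable L"] by linarith
      thus ?thesis using ppos[of d] by (simp add: field_simps)
    qed
    ultimately show ?thesis by simp
  qed
  have conv: "converges_to_Z L nd"
    unfolding converges_to_Z_def
  proof
    fix r
    define K :: nat where "K = 2 * r + 2"
    define C where "C = real (\<Sum>m\<in>{1..K}. card (UNIV::'a set) ^ m)"
    have C0: "0 \<le> C" unfolding C_def by (rule of_nat_0_le_iff)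
    define NN where "NN = (\<lambda>d. real (card {v \<in> Ln L (nd d). \<not> left_prolongable L v}) / real (card (Ln L (nd d)))
       + real (card {v \<in> Ln L (nd d). \<not> right_prolongable L v}) / real (card (Ln L (nd d))))"
    define f where "f = (\<lambda>d. 1 - ((4 + 6 * real K) * inverse (real (Suc d)) + 6 * (1 + real K) * NN d
       + C * inverse (real (Suc d))))"
    let ?g = "\<lambda>d. real (card {v \<in> Ln L (nd d). ball_is_line L (nd d) r v}) / real (card (Ln L (nd d)))"
    have NNlim: "NN \<longlonglongrightarrow> 0 + 0" unfolding NN_def by (intro tendsto_add lim_l lim_r)
    have "(\<lambda>d. (4 + 6 * real K) * inverse (real (Suc d)) + 6 * (1 + real K) * NN d + C * inverse (real (Suc d)))
        \<longlonglongrightarrow> (4 + 6 * real K) * 0 + 6 * (1 + real K) * (0 + 0) + C * 0"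
      by (intro tendsto_add tendsto_mult tendsto_const LIMSEQ_inverse_real_of_nat NNlim)
    hence flim: "f \<longlonglongrightarrow> 1" unfolding f_def using tendsto_diff[OF tendsto_const[of 1]] by fastforce
    have upper: "eventually (\<lambda>d. ?g d \<le> 1) sequentially"
    proof (rule always_eventually, rule allI)
      fix d
      have "card {v \<in> Ln L (nd d). ball_is_line L (nd d) r v} \<le> card (Ln L (nd d))"
        by (rule card_mono[OF Ln_finite]) auto
      thus "?g d \<le> 1" using ppos[of d] by (simp add: divide_le_eq_1)
    qed
    have lower: "eventually (\<lambda>d. f d \<le> ?g d) sequentially"
      unfolding eventually_sequentially
    proof (intro exI allI impI)
      fix d assume dK: "K \<le> d"
      let ?n = "nd d"
      let ?P = "real (card (Ln L ?n))" and ?q = "real (card (Ln L (Suc ?n)))"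
      let ?gg = "real (card (Gd L ?n))" and ?PP = "real (card (PP L ?n))"
      let ?lin = "real (card {v \<in> Ln L ?n. ball_is_line L ?n r v})"
      let ?NL = "real (card {v \<in> Ln L ?n. \<not> left_prolongable L v})"
      let ?NR = "real (card {v \<in> Ln L ?n. \<not> right_prolongable L v})"
      let ?e = "inverse (real (Suc d))"
      have Kn: "K \<le> ?n" using dK dle[of d] by simp
      have cm: "card (Ln L ?n) + 2 * card (Gd L ?n) + 2 * K * card (Gd L ?n)
          \<le> card {v \<in> Ln L ?n. ball_is_line L ?n r v} + 2 * card (Ln L ?n) + 2 * K * card (Ln L (Suc ?n))
           + (\<Sum>m\<in>{1..K}. card (UNIV::'a set) ^ m)"
        by (rule count_main[OF fac K_def Kn])
      have h1: "?P + 2 * ?gg + 2 * real K * ?gg \<le> ?lin + 2 * ?P + 2 * real K * ?q + C"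
        using of_nat_mono[OF cm, where 'a=real] unfolding C_def by (simp only: of_nat_add of_nat_mult of_nat_numeral)
      have h2: "3 * ?PP \<le> ?gg + 2 * ?q"
        using of_nat_mono[OF degree_bound[OF fac, of ?n], where 'a=real] by (simp only: of_nat_add of_nat_mult of_nat_numeral)
      have h3: "?P \<le> ?PP + (?NL + ?NR)"
        using of_nat_mono[OF V_bound[of L ?n], where 'a=real] by (simp only: of_nat_add add.assoc)
      have h4: "?q \<le> (1 + ?e) * ?P" by (rule pd2)
      have ri: "?P - (4 + 6 * real K) * (?e * ?P) - 6 * (1 + real K) * (?NL + ?NR) - C \<le> ?lin"
        by (rule ratio_ineq[OF h1 h2 h3 h4]) simp
      have Pp: "0 < ?P" by (rule ppos)
      have "(?P - (4 + 6 * real K) * (?e * ?P) - 6 * (1 + real K) * (?NL + ?NR) - C) / ?P \<le> ?lin / ?P"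
        using ri Pp by (simp add: divide_right_mono)
      moreover have "(?P - (4 + 6 * real K) * (?e * ?P) - 6 * (1 + real K) * (?NL + ?NR) - C) / ?P
          = 1 - (4 + 6 * real K) * ?e - 6 * (1 + real K) * NN d - C / ?P"
        unfolding NN_def by (rule div_expand[OF Pp])
      moreover have "C / ?P \<le> C * ?e"
      proof -
        have "C / ?P \<le> C / real (Suc d)" using pd1[of d] C0 by (intro divide_left_mono) auto
        thus ?thesis by (simp add: divide_inverse)
      qed
      ultimately show "f d \<le> ?g d" unfolding f_def by linarith
    qed
    show "?g \<longlonglongrightarrow> 1" by (rule tendsto_sandwich[OF lower upper flim tendsto_const])
  qed
  show ?thesis using smono pos conv by blast
qed


end
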